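(* Let $A$ be an $m\times m$ matrix-valued function with entries in $\mathcal N^\infty$ such that $\det A\neq0$, and let $\Phi=[\varphi_1,\cdots,\varphi_r]\in L^2_{M_{m\times r}}$. Let $\psi_i$ denote the $i$-th column of $\Psi:=A\Phi$. Then $\varphi_1,\cdots,\varphi_r$ are independent modulo Nevanlinna class if and only if $\psi_1,\cdots,\psi_r$ are independent modulo Nevanlinna class.
   Context: The Nevanlinna class $\mathcal N$ is the set of functions on the unit circle of the form $f/g$ with $f,g\in H^\infty$, $g\neq0$; $\mathcal N^p=\mathcal N\cap L^p$, $\mathcal N_{\mathbb C^m}$ denotes column vectors with entries in $\mathcal N$. $\det A\neq0$ means $\det A$ is not the zero function. Vectors $\varphi_1,\dots,\varphi_r\in L^2_{\mathbb C^m}$ are independent modulo Nevanlinna class if $a_1,\dots,a_r\in\mathcal N$ and $\sum a_i\varphi_i\in\mathcal N_{\mathbb C^m}$ imply $a_1=\cdots=a_r=0$. *)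

theory Defs
  imports "HOL-Analysis.Analysis"
begin

text \<open>Functions on the unit circle are represented by their values on the
parameter interval [0, 2 pi] (t corresponds to the point e^(i t)), with
Lebesgue measure (normalisation is irrelevant); equalities are almost everywhere.\<close>

abbreviation circ :: "real measure" where
  "circ \<equiv> lebesgue_on {0..2*pi}"

definition Linf :: "(real \<Rightarrow> complex) \<Rightarrow> bool" where
  "Linf f \<longleftrightarrow> f \<in> borel_measurable circ \<and> (\<exists>B. AE t in circ. cmod (f t) \<le> B)"

definition L2 :: "(real \<Rightarrow> complex) \<Rightarrow> bool" where
  "L2 f \<longleftrightarrow> f \<in> borel_measurable circ \<and> integrable circ (\<lambda>t. (cmod (f t))^2)"

text \<open>H-infinity: essentially bounded functions whose Fourier coefficients of
negative index vanish.\<close>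
definition Hinf :: "(real \<Rightarrow> complex) \<Rightarrow> bool" where
  "Hinf f \<longleftrightarrow> Linf f \<and>
     (\<forall>n::nat. n \<ge> 1 \<longrightarrow> (LINT t|circ. f t * exp (\<i> * of_nat n * of_real t)) = 0)"

definition Nev :: "(real \<Rightarrow> complex) \<Rightarrow> bool" where
  "Nev h \<longleftrightarrow> (\<exists>f g. Hinf f \<and> Hinf g \<and> \<not> (AE t in circ. g t = 0) \<and>
                     (AE t in circ. h t = f t / g t))"

definition Nev_inf :: "(real \<Rightarrow> complex) \<Rightarrow> bool" where
  "Nev_inf h \<longleftrightarrow> Nev h \<and> Linf h"

definition indep_mod_Nev :: "('r::finite \<Rightarrow> real \<Rightarrow> complex^'m) \<Rightarrow> bool" where
  "indep_mod_Nev \<phi> \<longleftrightarrow>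
     (\<forall>a :: 'r \<Rightarrow> real \<Rightarrow> complex.
        (\<forall>j. Nev (a j)) \<and> (\<forall>i. Nev (\<lambda>t. (\<Sum>j\<in>UNIV. a j t * (\<phi> j t $ i))))
        \<longrightarrow> (\<forall>j. AE t in circ. a j t = 0))"

end

theory Submission
  imports Defs
begin


lemma circ_fin: "finite_measure circ"
  by (rule finite_measure_lebesgue_on) auto

lemma space_circ[simp]: "space circ = {0..2*pi}" by simp

lemma Linf_integrable: "Linf f \<Longrightarrow> integrable circ f"
  using finite_measure.integrable_const_bound[OF circ_fin] unfolding Linf_def by blast

lemma Linf_meas: "Linf f \<Longrightarrow> f \<in> borel_measurable circ"
  unfolding Linf_def by blast

lemma cont_meas: "continuous_on {0..2*pi} f \<Longrightarrow> (f::real\<Rightarrow>'a::euclidean_space) \<in> borel_measurable circ"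
  by (rule continuous_imp_measurable_on_sets_lebesgue) auto

lemma cont_Linf: "continuous_on {0..2*pi} f \<Longrightarrow> Linf f"
proof -
  assume c: "continuous_on {0..2*pi} f"
  have "compact (f ` {0..2*pi})" by (rule compact_continuous_image[OF c]) auto
  then obtain B where "\<forall>x\<in>f ` {0..2*pi}. norm x \<le> B"
    using compact_imp_bounded bounded_iff by metis
  then have "AE t in circ. cmod (f t) \<le> B" by (intro AE_I2) auto
  then show ?thesis unfolding Linf_def using cont_meas[OF c] by blast
qed

lemma Linf_add: "Linf f \<Longrightarrow> Linf g \<Longrightarrow> Linf (\<lambda>t. f t + g t)"
proof -
  assume a: "Linf f" "Linf g"
  then obtain B C where "AE t in circ. cmod (f t) \<le> B" "AE t in circ. cmod (g t) \<le> C"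
    unfolding Linf_def by blast
  then have "AE t in circ. cmod (f t + g t) \<le> B + C"
    by eventually_elim (meson add_mono norm_triangle_ineq order_trans)
  then show ?thesis using a unfolding Linf_def by auto
qed

lemma Linf_mult: "Linf f \<Longrightarrow> Linf g \<Longrightarrow> Linf (\<lambda>t. f t * g t)"
proof -
  assume a: "Linf f" "Linf g"
  then obtain B C where "AE t in circ. cmod (f t) \<le> B" "AE t in circ. cmod (g t) \<le> C"
    unfolding Linf_def by blast
  then have "AE t in circ. cmod (f t * g t) \<le> B * C"
    by eventually_elim (simp add: norm_mult mult_mono')
  then show ?thesis using a unfolding Linf_def by auto
qed

lemma Linf_const: "Linf (\<lambda>t. c)"
  by (rule cont_Linf) auto

lemma Linf_cmult: "Linf f \<Longrightarrow> Linf (\<lambda>t. c * f t)"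
  using Linf_mult[OF Linf_const] by blast

lemma Linf_neg: "Linf f \<Longrightarrow> Linf (\<lambda>t. - f t)"
  using Linf_cmult[of f "-1"] by simp

lemma Linf_diff: "Linf f \<Longrightarrow> Linf g \<Longrightarrow> Linf (\<lambda>t. f t - g t)"
  using Linf_add[OF _ Linf_neg] by (simp add: algebra_simps)

lemma Linf_AE: "Linf f \<Longrightarrow> g \<in> borel_measurable circ \<Longrightarrow> AE t in circ. f t = g t \<Longrightarrow> Linf g"
proof -
  assume a: "Linf f" "g \<in> borel_measurable circ" "AE t in circ. f t = g t"
  then obtain B where "AE t in circ. cmod (f t) \<le> B" unfolding Linf_def by blast
  with a(3) have "AE t in circ. cmod (g t) \<le> B" by eventually_elim auto
  then show ?thesis using a unfolding Linf_def by auto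
qed

lemma exp_cis_pow: "exp (\<i> * of_nat n * of_real t) = cis t ^ n"
proof -
  have "\<i> * of_nat n * of_real t = of_nat n * (\<i> * of_real t)" by simp
  then show ?thesis by (simp only: exp_of_nat_mult cis_conv_exp)
qed

lemma cis_cont: "continuous_on S (\<lambda>t. cis t ^ n)"
  by (intro continuous_intros)

lemma int_cis_pow:
  assumes "n \<ge> 1" shows "(LINT t|circ. cis t ^ n) = 0"
proof -
  have c: "continuous_on {0..2*pi} (\<lambda>t. cis t ^ n)" by (rule cis_cont)
  have "(LINT t|circ. cis t ^ n) = integral {0..2*pi} (\<lambda>t. cis t ^ n)"
    by (rule lebesgue_integral_eq_integral) (use continuous_imp_integrable[of 0 "2*pi"] c in auto)
  also have "\<dots> = 0"
  proof -
    let ?F = "\<lambda>t. cis (real n * t) / (\<i> * of_nat n)"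
    have "((\<lambda>t. cis t ^ n) has_integral (?F (2*pi) - ?F 0)) {0..2*pi}"
    proof (rule fundamental_theorem_of_calculus)
      fix x assume "x \<in> {0..2*pi}"
      have "((\<lambda>z. exp (\<i> * of_nat n * z) / (\<i> * of_nat n)) has_field_derivative
           (\<i> * of_real (real n)) * exp (\<i> * of_nat n * of_real x) / (\<i> * of_nat n)) (at (of_real x))"
        by (auto intro!: derivative_eq_intros)
      from has_vector_derivative_real_field[OF this]
      have "((\<lambda>t. exp (\<i> * of_real (real n * t)) / (\<i> * of_nat n)) has_vector_derivative
           (\<i> * of_real (real n)) * exp (\<i> * of_real (real n * x)) / (\<i> * of_nat n)) (at x)"
        by (simp add: mult.assoc)
      moreover have "(\<i> * of_real (real n)) * exp (\<i> * of_real (real n * x)) / (\<i> * of_nat n) = cis x ^ n"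
        using assms exp_cis_pow[of n x] by (simp add: cis_conv_exp mult.assoc)
      ultimately have "((\<lambda>t. exp (\<i> * of_real (real n * t)) / (\<i> * of_nat n)) has_vector_derivative cis x ^ n) (at x)"
        by simp
      then show "(?F has_vector_derivative cis x ^ n) (at x within {0..2*pi})"
        by (auto simp: cis_conv_exp intro: has_vector_derivative_at_within)
    qed auto
    moreover have "?F (2*pi) - ?F 0 = 0"
    proof -
      have "cis (real n * (2*pi)) = 1"
        using Complex.DeMoivre[of "2*pi" n] by simp
      then show ?thesis by simp
    qed
    ultimately show ?thesis by (simp add: integral_unique)
  qed
  finally show ?thesis .
qed

lemma int_const: "(LINT t|circ. c) = (2*pi) * (c::complex)"
proof -
  have "measure circ {0..2*pi} = 2*pi"
    by (simp add: measure_restrict_space)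
  then show ?thesis by (simp add: scaleR_conv_of_real)
qed


lemma Hinf_iff: "Hinf f \<longleftrightarrow> Linf f \<and> (\<forall>n\<ge>1. (LINT t|circ. f t * cis t ^ n) = 0)"
  unfolding Hinf_def exp_cis_pow by simp

lemma int_Linf_cont: "Linf f \<Longrightarrow> continuous_on {0..2*pi} g \<Longrightarrow> integrable circ (\<lambda>t. f t * g t)"
  by (rule Linf_integrable[OF Linf_mult[OF _ cont_Linf]])

lemma Linf_cis: "Linf (\<lambda>t. cis t ^ n)"
  by (rule cont_Linf[OF cis_cont])

lemma Linf_poly: "Linf (\<lambda>t. poly P (cis t))"
  by (rule cont_Linf) (intro continuous_intros)

lemma AP:
  assumes "Hinf h"
  shows "(LINT t|circ. h t * poly R (cis t)) = coeff R 0 * (LINT t|circ. h t)"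
proof -
  have L: "Linf h" using assms Hinf_iff by blast
  have "(LINT t|circ. h t * poly R (cis t)) = (LINT t|circ. (\<Sum>j\<le>degree R. coeff R j * (h t * cis t ^ j)))"
    by (simp add: poly_altdef sum_distrib_left algebra_simps)
  also have "\<dots> = (\<Sum>j\<le>degree R. (LINT t|circ. coeff R j * (h t * cis t ^ j)))"
    by (rule Bochner_Integration.integral_sum) (intro integrable_mult_right int_Linf_cont[OF L cis_cont])
  also have "\<dots> = (\<Sum>j\<le>degree R. if j = 0 then coeff R 0 * (LINT t|circ. h t) else 0)"
  proof (rule sum.cong[OF refl])
    fix j assume "j \<in> {..degree R}"
    show "(LINT t|circ. coeff R j * (h t * cis t ^ j)) = (if j = 0 then coeff R 0 * (LINT t|circ. h t) else 0)"
    proof (cases "j = 0")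
      case True then show ?thesis by simp
    next
      case False
      then have "(LINT t|circ. h t * cis t ^ j) = 0" using assms Hinf_iff by auto
      then show ?thesis using False by simp
    qed
  qed
  also have "\<dots> = coeff R 0 * (LINT t|circ. h t)"
    by (simp add: sum.delta)
  finally show ?thesis .
qed

lemma Hinf_one: "Hinf (\<lambda>t. 1)"
  unfolding Hinf_iff using int_cis_pow Linf_const by auto

lemma Hinf_poly: "Hinf (\<lambda>t. poly P (cis t))"
  unfolding Hinf_iff
proof (intro conjI allI impI)
  show "Linf (\<lambda>t. poly P (cis t))" by (rule Linf_poly)
  fix n :: nat assume n: "n \<ge> 1"
  have "(LINT t|circ. poly P (cis t) * cis t ^ n) = (LINT t|circ. 1 * poly (P * monom 1 n) (cis t))"
    by (simp add: poly_monom)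
  also have "\<dots> = coeff (P * monom 1 n) 0 * (LINT t|circ. 1)"
    by (rule AP[OF Hinf_one])
  also have "coeff (P * monom 1 n) 0 = 0" using n by (simp add: coeff_mult_0 coeff_monom)
  finally show "(LINT t|circ. poly P (cis t) * cis t ^ n) = 0" by simp
qed

lemma Hinf_add: "Hinf f \<Longrightarrow> Hinf g \<Longrightarrow> Hinf (\<lambda>t. f t + g t)"
  unfolding Hinf_iff
  by (auto simp: Linf_add distrib_right int_Linf_cont[OF _ cis_cont])

lemma Hinf_cmult: "Hinf f \<Longrightarrow> Hinf (\<lambda>t. c * f t)"
  unfolding Hinf_iff
  by (auto simp: Linf_cmult mult.assoc)

lemma Hinf_neg: "Hinf f \<Longrightarrow> Hinf (\<lambda>t. - f t)"
  using Hinf_cmult[of f "-1"] by simp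

lemma Hinf_diff: "Hinf f \<Longrightarrow> Hinf g \<Longrightarrow> Hinf (\<lambda>t. f t - g t)"
  using Hinf_add[OF _ Hinf_neg] by (simp add: algebra_simps)

lemma Hinf_const: "Hinf (\<lambda>t. c)"
  using Hinf_cmult[OF Hinf_one, of c] by simp

lemma Hinf_AE: "Hinf f \<Longrightarrow> g \<in> borel_measurable circ \<Longrightarrow> AE t in circ. f t = g t \<Longrightarrow> Hinf g"
proof -
  assume a: "Hinf f" "g \<in> borel_measurable circ" "AE t in circ. f t = g t"
  have "Linf g" using a Linf_AE Hinf_iff by blast
  moreover have "(LINT t|circ. g t * cis t ^ n) = (LINT t|circ. f t * cis t ^ n)" for n
    by (rule integral_cong_AE) (use a cont_meas[OF cis_cont] Linf_meas Hinf_iff in \<open>auto intro!: borel_measurable_times elim: AE_mp\<close>)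
  ultimately show ?thesis using a Hinf_iff by auto
qed


definition lp :: "nat \<Rightarrow> complex poly \<Rightarrow> real \<Rightarrow> complex" where
  "lp N P t = cis (- (real N * t)) * poly P (cis t)"

definition LP :: "(real \<Rightarrow> complex) \<Rightarrow> bool" where
  "LP f \<longleftrightarrow> (\<exists>N P. f = lp N P)"

lemma cis_pow_inv: "cis (- (real N * t)) * cis t ^ N = 1"
  by (simp add: Complex.DeMoivre cis_mult)

lemma LP_const: "LP (\<lambda>t. c)"
  unfolding LP_def by (rule exI[of _ 0], rule exI[of _ "[:c:]"]) (auto simp: lp_def)

lemma LP_add: "LP f \<Longrightarrow> LP g \<Longrightarrow> LP (\<lambda>t. f t + g t)"
proof -
  assume "LP f" "LP g"
  then obtain N P M Q where f: "f = lp N P" and g: "g = lp M Q" unfolding LP_def by blast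
  have "(\<lambda>t. f t + g t) = lp (N+M) (P * monom 1 M + Q * monom 1 N)"
  proof
    fix t
    have e: "cis (- (real (N+M) * t)) = cis (- (real N * t)) * cis (- (real M * t))"
      by (simp add: cis_mult algebra_simps)
    show "f t + g t = lp (N+M) (P * monom 1 M + Q * monom 1 N) t"
      unfolding f g lp_def e
      using cis_pow_inv[of M t] cis_pow_inv[of N t]
      by (simp add: poly_monom algebra_simps)
  qed
  then show ?thesis unfolding LP_def by blast
qed

lemma LP_mult: "LP f \<Longrightarrow> LP g \<Longrightarrow> LP (\<lambda>t. f t * g t)"
proof -
  assume "LP f" "LP g"
  then obtain N P M Q where f: "f = lp N P" and g: "g = lp M Q" unfolding LP_def by blast
  have "(\<lambda>t. f t * g t) = lp (N+M) (P * Q)"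
  proof
    fix t
    have e: "cis (- (real (N+M) * t)) = cis (- (real N * t)) * cis (- (real M * t))"
      by (simp add: cis_mult algebra_simps)
    show "f t * g t = lp (N+M) (P * Q) t"
      unfolding f g lp_def e by (simp add: algebra_simps)
  qed
  then show ?thesis unfolding LP_def by blast
qed

lemma LP_cos: "LP (\<lambda>t. of_real (cos t))"
proof -
  have "(\<lambda>t. of_real (cos t)) = lp 1 [:1/2, 0, 1/2:]"
  proof
    fix t
    have "cis (- t) * (1/2 + cis t * cis t / 2) = (cis (-t) + cis t) / 2"
      by (simp add: algebra_simps cis_mult)
    also have "\<dots> = of_real (cos t)"
      by (simp add: cis.ctr complex_eq_iff)
    finally show "of_real (cos t) = lp 1 [:1/2, 0, 1/2:] t"
      by (simp add: lp_def algebra_simps)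
  qed
  then show ?thesis unfolding LP_def by blast
qed

lemma LP_sin: "LP (\<lambda>t. of_real (sin t))"
proof -
  have "(\<lambda>t. of_real (sin t)) = lp 1 [:-1/(2*\<i>), 0, 1/(2*\<i>):]"
  proof
    fix t
    have "cis (- t) * (-1/(2*\<i>) + cis t * cis t / (2*\<i>)) = (cis t - cis (-t)) / (2*\<i>)"
      by (simp add: algebra_simps cis_mult diff_divide_distrib)
    also have "\<dots> = of_real (sin t)"
      by (simp add: cis.ctr complex_eq_iff)
    finally show "of_real (sin t) = lp 1 [:-1/(2*\<i>), 0, 1/(2*\<i>):] t"
      by (simp add: lp_def algebra_simps)
  qed
  then show ?thesis unfolding LP_def by blast
qed

lemma rpf_LP:
  fixes q :: "complex \<Rightarrow> real"
  assumes "real_polynomial_function q"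
  shows "LP (\<lambda>t. of_real (q (cis t)))"
  using assms
proof induction
  case (linear f)
  have lin: "linear f" using linear bounded_linear.linear by blast
  have fz: "f z = Re z * f 1 + Im z * f \<i>" for z
  proof -
    have "z = Re z *\<^sub>R 1 + Im z *\<^sub>R \<i>" by (simp add: complex_eq_iff)
    then have "f z = f (Re z *\<^sub>R 1 + Im z *\<^sub>R \<i>)" by simp
    also have "\<dots> = Re z * f 1 + Im z * f \<i>"
      using lin by (simp add: linear_add linear_scale)
    finally show ?thesis .
  qed
  have "(\<lambda>t. of_real (f (cis t)) :: complex) = (\<lambda>t. of_real (cos t) * of_real (f 1) + of_real (sin t) * of_real (f \<i>))"
  proof
    fix t show "(of_real (f (cis t)) :: complex) = of_real (cos t) * of_real (f 1) + of_real (sin t) * of_real (f \<i>)"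
      using fz[of "cis t"] by simp
  qed
  moreover have "LP (\<lambda>t. of_real (cos t) * of_real (f 1) + of_real (sin t) * of_real (f \<i>))"
    by (intro LP_add LP_mult LP_const LP_cos LP_sin)
  ultimately show ?case by simp
next
  case (const c) then show ?case by (rule LP_const)
next
  case (add f g) then show ?case unfolding of_real_add by (intro LP_add) auto
next
  case (mult f g) then show ?case unfolding of_real_mult by (intro LP_mult) auto
qed

lemma pf_LP:
  fixes q :: "complex \<Rightarrow> complex"
  assumes "polynomial_function q"
  shows "LP (\<lambda>t. q (cis t))"
proof -
  have "real_polynomial_function (Re \<circ> q)" "real_polynomial_function (Im \<circ> q)"
    using assms bounded_linear_Re bounded_linear_Im unfolding polynomial_function_def by blast+
  then have "LP (\<lambda>t. of_real ((Re \<circ> q) (cis t)))" "LP (\<lambda>t. of_real ((Im \<circ> q) (cis t)))"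
    using rpf_LP by blast+
  then have "LP (\<lambda>t. of_real ((Re \<circ> q) (cis t)) + \<i> * of_real ((Im \<circ> q) (cis t)))"
    by (intro LP_add LP_mult LP_const)
  moreover have "(\<lambda>t. of_real ((Re \<circ> q) (cis t)) + \<i> * of_real ((Im \<circ> q) (cis t))) = (\<lambda>t. q (cis t))"
    by (auto simp: complex_eq_iff)
  ultimately show ?thesis by simp
qed

lemma LP_cont: "LP f \<Longrightarrow> continuous_on S f"
  unfolding LP_def lp_def by (auto intro!: continuous_intros)


lemma Arg2pi_cis: "0 \<le> t \<Longrightarrow> t < 2*pi \<Longrightarrow> Arg2pi (cis t) = t"
  by (rule Arg2pi_unique[of 1]) (auto simp: cis_conv_exp)

lemma cis_sphere: "cis ` {0..2*pi} = sphere 0 1"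
proof
  show "cis ` {0..2*pi} \<subseteq> sphere 0 1" by auto
  show "sphere 0 1 \<subseteq> cis ` {0..2*pi}"
  proof
    fix z :: complex assume "z \<in> sphere 0 1"
    then have "cmod z = 1" by simp
    then have "z = cis (Arg2pi z)" using Arg2pi_eq[of z] by (simp add: cis_conv_exp)
    moreover have "Arg2pi z \<in> {0..2*pi}" using Arg2pi_ge_0 Arg2pi_lt_2pi less_imp_le by auto
    ultimately show "z \<in> cis ` {0..2*pi}" by blast
  qed
qed

lemma SW_periodic:
  assumes k: "continuous_on {0..2*pi} k" and per: "k 0 = k (2*pi)" and e: "e > 0"
  shows "\<exists>p. LP p \<and> (\<forall>t\<in>{0..2*pi}. cmod (k t - p t) < e)"
proof -
  define K where "K z = k (Arg2pi z)" for z
  have KC: "K (cis t) = k t" if "t \<in> {0..2*pi}" for t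
  proof (cases "t = 2*pi")
    case True
    have "Arg2pi (cis t) = 0" using True Arg2pi_of_real[of 1] by simp
    then show ?thesis using True per by (simp add: K_def)
  next
    case False
    then show ?thesis using that by (simp add: K_def Arg2pi_cis)
  qed
  have q: "quotient_map (top_of_set {0..2*pi}) (top_of_set (sphere 0 1)) cis"
  proof (rule continuous_imp_quotient_map)
    show "continuous_map (top_of_set {0..2*pi}) (top_of_set (sphere 0 (1::real))) cis"
      unfolding continuous_map_subtopology_eu
      by (auto simp: continuous_on_cis continuous_on_id)
    show "compact_space (top_of_set {0..2*pi::real})"
      by (rule compact_space_subtopology) (simp add: compactin_euclidean_iff)
    show "Hausdorff_space (top_of_set (sphere (0::complex) 1))"
      by (rule Hausdorff_space_subtopology[OF Hausdorff_space_euclidean])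
    show "cis ` topspace (top_of_set {0..2*pi}) = topspace (top_of_set (sphere 0 1))"
      using cis_sphere by simp
  qed
  have "continuous_map (top_of_set {0..2*pi}) euclidean (K \<circ> cis)"
    unfolding continuous_map_iff_continuous
    by (rule continuous_on_eq[OF k]) (simp add: KC)
  then have "continuous_map (top_of_set (sphere 0 1)) euclidean K"
    by (rule continuous_compose_quotient_map[OF q])
  then have Kc: "continuous_on (sphere 0 1) K"
    unfolding continuous_map_iff_continuous .
  obtain g where g: "polynomial_function g" "\<forall>z\<in>sphere 0 1. norm (K z - g z) < e"
    using Stone_Weierstrass_polynomial_function[OF compact_sphere Kc e] by blast
  have "LP (\<lambda>t. g (cis t))" by (rule pf_LP[OF g(1)])
  moreover have "\<forall>t\<in>{0..2*pi}. cmod (k t - g (cis t)) < e"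
  proof
    fix t :: real assume t: "t \<in> {0..2*pi}"
    have "cis t \<in> sphere 0 1" by simp
    then have "cmod (K (cis t) - g (cis t)) < e" using g(2) by blast
    then show "cmod (k t - g (cis t)) < e" using KC[OF t] by simp
  qed
  ultimately show ?thesis by blast
qed


definition clip :: "real \<Rightarrow> complex \<Rightarrow> complex" where
  "clip B z = of_real (max (-B) (min B (Re z))) + \<i> * of_real (max (-B) (min B (Im z)))"

lemma clip_id: "cmod z \<le> B \<Longrightarrow> clip B z = z"
  using abs_Re_le_cmod[of z] abs_Im_le_cmod[of z]
  by (auto simp: clip_def complex_eq_iff)

lemma clip_bound: "B \<ge> 0 \<Longrightarrow> cmod (clip B z) \<le> 2 * B"
proof -
  assume B: "B \<ge> 0"
  have "cmod (clip B z) \<le> \<bar>max (-B) (min B (Re z))\<bar> + \<bar>max (-B) (min B (Im z))\<bar>"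
    unfolding clip_def using norm_triangle_ineq[of "of_real (max (-B) (min B (Re z)))" "\<i> * of_real (max (-B) (min B (Im z)))"]
    by (simp add: norm_mult)
  also have "\<dots> \<le> 2 * B" using B by auto
  finally show ?thesis .
qed

lemma clip_cont: "continuous_on S g \<Longrightarrow> continuous_on S (\<lambda>x. clip B (g x))"
  unfolding clip_def by (intro continuous_intros continuous_on_max continuous_on_min) auto

lemma clip_tendsto: "(X \<longlongrightarrow> y) F \<Longrightarrow> ((\<lambda>x. clip B (X x)) \<longlongrightarrow> clip B y) F"
  unfolding clip_def by (intro tendsto_intros tendsto_max tendsto_min) auto

definition chi :: "nat \<Rightarrow> real \<Rightarrow> real" where
  "chi j t = min 1 (max 0 (real (Suc j) * min t (2*pi - t)))"

lemma chi_cont: "continuous_on S (chi j)"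
  unfolding chi_def by (intro continuous_intros continuous_on_max continuous_on_min)

lemma chi_0: "chi j 0 = 0" and chi_2pi: "chi j (2*pi) = 0"
  by (auto simp: chi_def)

lemma chi_bound: "0 \<le> chi j t" "chi j t \<le> 1"
  by (auto simp: chi_def)

lemma chi_lim: assumes "0 < t" "t < 2*pi" shows "(\<lambda>j. chi j t) \<longlonglongrightarrow> 1"
proof -
  define m where "m = min t (2*pi - t)"
  have m: "m > 0" using assms by (auto simp: m_def)
  obtain J :: nat where J: "1 / m < J" using reals_Archimedean2 by blast
  have "eventually (\<lambda>j. chi j t = 1) sequentially"
    unfolding eventually_sequentially
  proof (intro exI allI impI)
    fix j assume "J \<le> j"
    then have "1 / m < real (Suc j)" using J by linarith
    then have "1 < real (Suc j) * m" using m by (simp add: field_simps)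
    then show "chi j t = 1" by (simp add: chi_def m_def[symmetric])
  qed
  then show ?thesis by (rule tendsto_eventually)
qed

lemma negligible_AE: "negligible S \<Longrightarrow> AE t in circ. t \<notin> S"
proof -
  assume S: "negligible S"
  have "S \<inter> {0..2*pi} \<in> null_sets circ"
    using S negligible_subset[of S "S \<inter> {0..2*pi}"]
    by (subst null_sets_restrict_space) (auto simp: negligible_iff_null_sets)
  then show ?thesis by (rule AE_I') auto
qed

lemma density:
  assumes "Linf f"
  shows "\<exists>p C. (\<forall>j. LP (p j)) \<and> (\<forall>j. \<forall>t\<in>{0..2*pi}. cmod (p j t) \<le> C) \<and>
               (AE t in circ. (\<lambda>j. p j t) \<longlonglongrightarrow> f t)"
proof -
  obtain B0 where B0: "AE t in circ. cmod (f t) \<le> B0" using assms unfolding Linf_def by blast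
  define B where "B = max B0 0"
  have B: "AE t in circ. cmod (f t) \<le> B" "B \<ge> 0"
    using B0 by (auto simp: B_def elim!: AE_mp)
  have "f measurable_on {0..2*pi}"
    using assms Linf_meas by (subst measurable_on_iff_borel_measurable) auto
  then obtain N g where N: "negligible N" and gc: "\<And>n. continuous_on UNIV (g n)"
    and glim: "\<And>x. x \<notin> N \<Longrightarrow> (\<lambda>n. g n x) \<longlonglongrightarrow> (if x \<in> {0..2*pi} then f x else 0)"
    unfolding measurable_on_def by blast
  define k where "k j t = of_real (chi j t) * clip B (g j t)" for j t
  have kc: "continuous_on {0..2*pi} (k j)" for j
    unfolding k_def
    by (intro continuous_intros chi_cont clip_cont continuous_on_subset[OF gc]) auto
  have kper: "k j 0 = k j (2*pi)" for j by (simp add: k_def chi_0 chi_2pi)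
  have kb: "cmod (k j t) \<le> 2 * B" for j t
  proof -
    have "cmod (k j t) = \<bar>chi j t\<bar> * cmod (clip B (g j t))" by (simp add: k_def norm_mult)
    also have "\<dots> \<le> 1 * (2 * B)"
      using chi_bound[of j t] clip_bound[OF B(2)] by (intro mult_mono) auto
    finally show ?thesis by simp
  qed
  have "\<forall>j. \<exists>p. LP p \<and> (\<forall>t\<in>{0..2*pi}. cmod (k j t - p t) < inverse (real (Suc j)))"
    using SW_periodic[OF kc kper] by simp
  then obtain p where p: "\<And>j. LP (p j)" "\<And>j t. t \<in> {0..2*pi} \<Longrightarrow> cmod (k j t - p j t) < inverse (real (Suc j))"
    by metis
  have pb: "cmod (p j t) \<le> 2 * B + 1" if "t \<in> {0..2*pi}" for j t
  proof -
    have "cmod (p j t) \<le> cmod (k j t) + cmod (p j t - k j t)"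
      using norm_triangle_ineq[of "k j t" "p j t - k j t"] by simp
    also have "\<dots> = cmod (k j t) + cmod (k j t - p j t)" by (simp add: norm_minus_commute)
    also have "\<dots> \<le> 2 * B + 1"
    proof -
      have "inverse (real (Suc j)) \<le> 1" by (simp add: inverse_le_1_iff)
      then show ?thesis using kb[of j t] p(2)[OF that, of j] by linarith
    qed
    finally show ?thesis .
  qed
  have "AE t in circ. t \<notin> N" by (rule negligible_AE[OF N])
  moreover have "AE t in circ. t \<notin> {0, 2*pi}" by (rule negligible_AE) (auto intro: negligible_finite)
  moreover have "AE t in circ. t \<in> {0..2*pi}" by (rule AE_I2) simp
  ultimately have "AE t in circ. (\<lambda>j. p j t) \<longlonglongrightarrow> f t"
    using B(1)
  proof eventually_elim
    case (elim t)
    then have t: "0 < t" "t < 2*pi" "t \<in> {0..2*pi}" by auto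
    have "(\<lambda>j. clip B (g j t)) \<longlonglongrightarrow> clip B (f t)"
      using glim[of t] elim t by (auto intro: clip_tendsto)
    then have "(\<lambda>j. clip B (g j t)) \<longlonglongrightarrow> f t" using clip_id elim by simp
    then have kl: "(\<lambda>j. k j t) \<longlonglongrightarrow> of_real 1 * f t"
      unfolding k_def by (intro tendsto_mult tendsto_of_real chi_lim t)
    have "(\<lambda>j. p j t - k j t) \<longlonglongrightarrow> 0"
    proof (rule Lim_null_comparison[OF _ LIMSEQ_inverse_real_of_nat])
      show "\<forall>\<^sub>F j in sequentially. cmod (p j t - k j t) \<le> inverse (real (Suc j))"
        using p(2)[OF t(3)] by (auto simp: norm_minus_commute less_imp_le)
    qed
    from tendsto_add[OF kl this] show ?case by simp
  qed
  then show ?thesis using p(1) pb by blast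
qed


lemma cis_pow_real: "cis t ^ k = cis (real k * t)"
  by (simp add: Complex.DeMoivre)

lemma lp_expand: "lp N P t = (\<Sum>k\<le>degree P. coeff P k * cis ((real k - real N) * t))"
proof -
  have "lp N P t = (\<Sum>k\<le>degree P. cis (- (real N * t)) * (coeff P k * cis t ^ k))"
    by (simp add: lp_def poly_altdef sum_distrib_left)
  also have "\<dots> = (\<Sum>k\<le>degree P. coeff P k * cis ((real k - real N) * t))"
    by (intro sum.cong refl) (simp add: cis_pow_real cis_mult algebra_simps)
  finally show ?thesis .
qed

lemma lp_cnj: "cnj (lp N P t) = (\<Sum>k\<le>degree P. cnj (coeff P k) * cis (of_int (int N - int k) * t))"
  unfolding lp_expand cnj_sum by (intro sum.cong refl) (simp add: cis_cnj algebra_simps)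

lemma Linf_bound: "Linf g \<Longrightarrow> \<exists>B. B \<ge> 0 \<and> (AE t in circ. cmod (g t) \<le> B)"
proof -
  assume "Linf g"
  then obtain B where "AE t in circ. cmod (g t) \<le> B" unfolding Linf_def by blast
  then have "AE t in circ. cmod (g t) \<le> max B 0" by (auto elim: AE_mp)
  then show ?thesis by (intro exI[of _ "max B 0"]) auto
qed

lemma meas_cnj: "f \<in> borel_measurable M \<Longrightarrow> (\<lambda>x. cnj (f x)) \<in> borel_measurable M"
  by (rule borel_measurable_continuous_on[OF continuous_on_cnj[OF continuous_on_id]])

lemma Linf_cis_int: "Linf (\<lambda>t. cis (c * t))"
  by (rule cont_Linf) (intro continuous_intros)

lemma uniq:
  assumes L: "Linf g" and z: "\<And>m::int. (LINT t|circ. g t * cis (of_int m * t)) = 0"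
  shows "AE t in circ. g t = 0"
proof -
  obtain p C where p: "\<And>j. LP (p j)" "\<And>j t. t \<in> {0..2*pi} \<Longrightarrow> cmod (p j t) \<le> C"
    and pl: "AE t in circ. (\<lambda>j. p j t) \<longlonglongrightarrow> g t"
    using density[OF L] by blast
  obtain B where B: "B \<ge> 0" "AE t in circ. cmod (g t) \<le> B" using Linf_bound[OF L] by blast
  have I0: "(LINT t|circ. g t * cnj (p j t)) = 0" for j
  proof -
    obtain N P where pj: "p j = lp N P" using p(1) unfolding LP_def by blast
    have "(LINT t|circ. g t * cnj (p j t)) =
          (LINT t|circ. (\<Sum>k\<le>degree P. cnj (coeff P k) * (g t * cis (of_int (int N - int k) * t))))"
      by (simp add: pj lp_cnj sum_distrib_left algebra_simps)
    also have "\<dots> = (\<Sum>k\<le>degree P. (LINT t|circ. cnj (coeff P k) * (g t * cis (of_int (int N - int k) * t))))"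
      by (rule Bochner_Integration.integral_sum)
         (intro integrable_mult_right Linf_integrable Linf_mult[OF L Linf_cis_int])
    also have "\<dots> = 0"
    proof (intro sum.neutral ballI)
      fix k assume "k \<in> {..degree P}"
      have "(LINT t|circ. g t * cis (of_int (int N - int k) * t)) = 0" by (rule z)
      then show "(LINT t|circ. cnj (coeff P k) * (g t * cis (of_int (int N - int k) * t))) = 0"
        by simp
    qed
    finally show ?thesis .
  qed
  have pc: "continuous_on {0..2*pi} (p j)" for j using p(1) LP_cont by blast
  have "(\<lambda>j. LINT t|circ. g t * cnj (p j t)) \<longlonglongrightarrow> (LINT t|circ. g t * cnj (g t))"
  proof (rule integral_dominated_convergence[where w="\<lambda>t. B * C"])
    show "(\<lambda>t. g t * cnj (g t)) \<in> borel_measurable circ"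
      using Linf_meas[OF L] by (intro borel_measurable_times meas_cnj)
    show "(\<lambda>t. g t * cnj (p j t)) \<in> borel_measurable circ" for j
      using Linf_meas[OF L] cont_meas[OF continuous_on_cnj[OF pc[of j]]] by (intro borel_measurable_times)
    show "integrable circ (\<lambda>t. B * C)"
      using finite_measure.integrable_const[OF circ_fin] by blast
    show "AE t in circ. (\<lambda>j. g t * cnj (p j t)) \<longlonglongrightarrow> g t * cnj (g t)"
      using pl by eventually_elim (intro tendsto_intros)
    show "AE t in circ. cmod (g t * cnj (p j t)) \<le> B * C" for j
      using B(2) AE_space[of circ]
    proof eventually_elim
      case (elim t)
      have "t \<in> {0..2*pi}" using elim by simp
      have "cmod (g t * cnj (p j t)) = cmod (g t) * cmod (p j t)" by (simp add: norm_mult)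
      also have "\<dots> \<le> B * C" using elim B(1) p(2)[of t j] by (intro mult_mono) auto
      finally show ?case .
    qed
  qed
  then have "(LINT t|circ. g t * cnj (g t)) = 0"
    using I0 by (simp add: LIMSEQ_const_iff)
  then have "(LINT t|circ. (cmod (g t))^2) = 0"
    unfolding complex_norm_square[symmetric] integral_complex_of_real by simp
  moreover have "integrable circ (\<lambda>t. (cmod (g t))^2)"
  proof (rule finite_measure.integrable_const_bound[OF circ_fin])
    show "AE t in circ. norm ((cmod (g t))^2) \<le> B^2"
      using B(2) by eventually_elim (simp add: power_mono)
    show "(\<lambda>t. (cmod (g t))^2) \<in> borel_measurable circ" using Linf_meas[OF L] by measurable
  qed
  ultimately have "AE t in circ. (cmod (g t))^2 = 0"
    using integral_nonneg_eq_0_iff_AE[of circ "\<lambda>t. (cmod (g t))^2"] by simp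
  then show ?thesis by auto
qed


lemma LP_split:
  assumes "LP p"
  shows "\<exists>Q R. (\<forall>t. p t = poly Q (cis t) + cnj (poly R (cis t))) \<and> coeff R 0 = 0"
proof -
  obtain N P where p: "p = lp N P" using assms unfolding LP_def by blast
  define A where "A = {..degree P}"
  define Q where "Q = (\<Sum>k\<in>{k\<in>A. N \<le> k}. monom (coeff P k) (k - N))"
  define R where "R = (\<Sum>k\<in>{k\<in>A. \<not> N \<le> k}. monom (cnj (coeff P k)) (N - k))"
  have "p t = poly Q (cis t) + cnj (poly R (cis t))" for t
  proof -
    have q: "poly Q (cis t) = (\<Sum>k\<in>A. if N \<le> k then coeff P k * cis ((real k - real N) * t) else 0)"
      unfolding Q_def poly_sum poly_monom
      by (subst sum.inter_filter[symmetric]) (auto simp: A_def cis_pow_real of_nat_diff intro!: sum.cong)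
    have r: "cnj (poly R (cis t)) = (\<Sum>k\<in>A. if \<not> N \<le> k then coeff P k * cis ((real k - real N) * t) else 0)"
      unfolding R_def poly_sum poly_monom cnj_sum
      by (subst sum.inter_filter[symmetric])
         (auto simp: A_def cis_pow_real of_nat_diff cis_cnj algebra_simps intro!: sum.cong)
    have "p t = (\<Sum>k\<in>A. coeff P k * cis ((real k - real N) * t))"
      unfolding p lp_expand A_def ..
    also have "\<dots> = (\<Sum>k\<in>A. (if N \<le> k then coeff P k * cis ((real k - real N) * t) else 0)
                         + (if \<not> N \<le> k then coeff P k * cis ((real k - real N) * t) else 0))"
      by (intro sum.cong) auto
    also have "\<dots> = poly Q (cis t) + cnj (poly R (cis t))"
      unfolding q r sum.distrib ..
    finally show ?thesis .
  qed
  moreover have "coeff R 0 = 0"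
    unfolding R_def coeff_sum by (intro sum.neutral) (auto simp: coeff_monom)
  ultimately show ?thesis by blast
qed

lemma norm_add_sq: "(cmod (a + b))^2 = (cmod a)^2 + (cmod b)^2 + 2 * Re (a * cnj b)"
  by (simp only: cmod_power2) (simp add: power2_sum algebra_simps)

lemma Linf_sq_int: "Linf u \<Longrightarrow> integrable circ (\<lambda>t. (cmod (u t))^2)"
proof -
  assume L: "Linf u"
  obtain B where B: "B \<ge> 0" "AE t in circ. cmod (u t) \<le> B" using Linf_bound[OF L] by blast
  show ?thesis
  proof (rule finite_measure.integrable_const_bound[OF circ_fin])
    show "AE t in circ. norm ((cmod (u t))^2) \<le> B^2"
      using B(2) by eventually_elim (simp add: power_mono)
    show "(\<lambda>t. (cmod (u t))^2) \<in> borel_measurable circ" using Linf_meas[OF L] by measurable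
  qed
qed

lemma small_ineq: fixes x d :: real assumes "d > 0" "x \<ge> 0" shows "x \<le> d + x^2 / d"
proof -
  have "0 \<le> (x - d/2)^2" by simp
  then have h1: "d * x \<le> x * x + d * d / 4" by (simp add: power2_eq_square algebra_simps)
  have h2: "d * d / 4 \<le> d * d" using assms by simp
  have "d * x \<le> d^2 + x^2" unfolding power2_eq_square using h1 h2 by linarith
  then have "x \<le> (d^2 + x^2) / d" using assms by (simp add: field_simps)
  also have "\<dots> = d + x^2 / d" using assms by (simp add: field_simps power2_eq_square)
  finally show ?thesis .
qed


lemma measure_circ[simp]: "measure circ {0..2*pi} = 2*pi"
  by (simp add: measure_restrict_space)

lemma int_const_real: "(LINT t|circ. (c::real)) = 2*pi*c"
proof -
  have "measure circ {0..2*pi} = 2*pi"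
    by (simp add: measure_restrict_space)
  then show ?thesis by simp
qed

lemma Hinf_mult:
  assumes F: "Hinf f" and G: "Hinf g"
  shows "Hinf (\<lambda>t. f t * g t)"
proof -
  have Lf: "Linf f" and Lg: "Linf g" using F G Hinf_iff by blast+
  obtain Bf where Bf: "Bf \<ge> 0" "AE t in circ. cmod (f t) \<le> Bf" using Linf_bound[OF Lf] by blast
  obtain Bg where Bg: "Bg \<ge> 0" "AE t in circ. cmod (g t) \<le> Bg" using Linf_bound[OF Lg] by blast
  obtain p C where p: "\<And>j. LP (p j)" "\<And>j t. t \<in> {0..2*pi} \<Longrightarrow> cmod (p j t) \<le> C"
    and pl: "AE t in circ. (\<lambda>j. p j t) \<longlonglongrightarrow> f t"
    using density[OF Lf] by blast
  have "\<forall>j. \<exists>Q R. (\<forall>t. p j t = poly Q (cis t) + cnj (poly R (cis t))) \<and> coeff R 0 = 0"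
    using LP_split p(1) by blast
  then obtain Q R where QR: "\<And>j t. p j t = poly (Q j) (cis t) + cnj (poly (R j) (cis t))"
    "\<And>j. coeff (R j) 0 = 0" by metis
  define q where "q j t = poly (Q j) (cis t)" for j t
  have key1: "(LINT t|circ. (cmod (q j t - f t))^2) \<le> (LINT t|circ. (cmod (p j t - f t))^2)" for j
  proof -
    define h where "h t = q j t - f t" for t
    define r where "r t = cnj (poly (R j) (cis t))" for t
    have Hh: "Hinf h" unfolding h_def q_def by (intro Hinf_diff Hinf_poly F)
    have Lh: "Linf h" using Hh Hinf_iff by blast
    have Lr: "Linf r" unfolding r_def by (rule cont_Linf) (intro continuous_intros)
    have Lcr: "Linf (\<lambda>t. cnj (r t))" unfolding r_def by (rule cont_Linf) (intro continuous_intros)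
    have pf: "p j t - f t = h t + r t" for t using QR(1)[of j t] by (simp add: h_def r_def q_def)
    have int0: "(LINT t|circ. h t * cnj (r t)) = 0"
    proof -
      have "(LINT t|circ. h t * cnj (r t)) = (LINT t|circ. h t * poly (R j) (cis t))" by (simp add: r_def)
      also have "\<dots> = coeff (R j) 0 * (LINT t|circ. h t)" by (rule AP[OF Hh])
      finally show ?thesis using QR(2) by simp
    qed
    have ci: "complex_integrable circ (\<lambda>t. h t * cnj (r t))"
      by (intro Linf_integrable Linf_mult Lh Lcr)
    have "(LINT t|circ. (cmod (p j t - f t))^2) =
          (LINT t|circ. (cmod (h t))^2 + (cmod (r t))^2 + 2 * Re (h t * cnj (r t)))"
      by (simp add: pf norm_add_sq)
    also have "\<dots> = (LINT t|circ. (cmod (h t))^2) + (LINT t|circ. (cmod (r t))^2) + 2 * (LINT t|circ. Re (h t * cnj (r t)))"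
      using Bochner_Integration.integral_add[OF Bochner_Integration.integrable_add[OF Linf_sq_int[OF Lh] Linf_sq_int[OF Lr]]
          integrable_mult_right[OF integrable_Re[OF ci], of 2]]
        Bochner_Integration.integral_add[OF Linf_sq_int[OF Lh] Linf_sq_int[OF Lr]]
      by (simp only: integral_mult_right_zero)
    also have "(LINT t|circ. Re (h t * cnj (r t))) = 0" using integral_Re[OF ci] int0 by simp
    finally have e: "(LINT t|circ. (cmod (p j t - f t))^2) =
        (LINT t|circ. (cmod (h t))^2) + (LINT t|circ. (cmod (r t))^2)" by simp
    have "(LINT t|circ. (cmod (r t))^2) \<ge> 0" by (rule integral_nonneg_AE) simp
    then show ?thesis using e by (simp add: h_def)
  qed
  have key2: "(\<lambda>j. LINT t|circ. (cmod (p j t - f t))^2) \<longlonglongrightarrow> 0"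
  proof -
    have "(\<lambda>j. LINT t|circ. (cmod (p j t - f t))^2) \<longlonglongrightarrow> (LINT t|circ. (0::real))"
    proof (rule integral_dominated_convergence[where w="\<lambda>t. (C + Bf)^2"])
      show "(\<lambda>t. 0::real) \<in> borel_measurable circ" by simp
      show "(\<lambda>t. (cmod (p j t - f t))^2) \<in> borel_measurable circ" for j
        using Linf_meas[OF Lf] cont_meas[OF LP_cont[OF p(1)], of j] by measurable
      show "integrable circ (\<lambda>t. (C + Bf)^2)"
        using finite_measure.integrable_const[OF circ_fin] by blast
      show "AE t in circ. (\<lambda>j. (cmod (p j t - f t))^2) \<longlonglongrightarrow> 0"
        using pl
      proof eventually_elim
        case (elim t)
        then have "(\<lambda>j. p j t - f t) \<longlonglongrightarrow> 0" by (rule Lim_null[THEN iffD1])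
        then have "(\<lambda>j. cmod (p j t - f t)) \<longlonglongrightarrow> 0" by (rule tendsto_norm_zero)
        from tendsto_power[OF this, of 2] show ?case by simp
      qed
      show "AE t in circ. norm ((cmod (p j t - f t))^2) \<le> (C + Bf)^2" for j
        using Bf(2) AE_space[of circ]
      proof eventually_elim
        case (elim t)
        then have t: "t \<in> {0..2*pi}" by simp
        have "cmod (p j t - f t) \<le> C + Bf"
          using norm_triangle_ineq4[of "p j t" "f t"] p(2)[OF t, of j] elim by linarith
        then show ?case by (simp add: power_mono)
      qed
    qed
    then show ?thesis by simp
  qed
  have key3: "(\<lambda>j. LINT t|circ. (cmod (q j t - f t))^2) \<longlonglongrightarrow> 0"
  proof (rule real_tendsto_sandwich[OF _ _ tendsto_const key2])
    show "\<forall>\<^sub>F j in sequentially. 0 \<le> (LINT t|circ. (cmod (q j t - f t))^2)"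
      by (intro always_eventually allI integral_nonneg_AE) simp
    show "\<forall>\<^sub>F j in sequentially. (LINT t|circ. (cmod (q j t - f t))^2) \<le> (LINT t|circ. (cmod (p j t - f t))^2)"
      using key1 by simp
  qed
  show ?thesis unfolding Hinf_iff
  proof (intro conjI allI impI)
    show "Linf (\<lambda>t. f t * g t)" by (rule Linf_mult[OF Lf Lg])
    fix n :: nat assume n: "n \<ge> 1"
    define X where "X = cmod (LINT t|circ. f t * g t * cis t ^ n)"
    have bound: "X \<le> Bg * (2*pi*d + (LINT t|circ. (cmod (q j t - f t))^2) / d)" if d: "d > 0" for j d
    proof -
      have Lq: "Linf (q j)" unfolding q_def by (rule Linf_poly)
      have z: "(LINT t|circ. q j t * g t * cis t ^ n) = 0"
      proof -
        have "(LINT t|circ. q j t * g t * cis t ^ n) = (LINT t|circ. g t * poly (Q j * monom 1 n) (cis t))"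
          by (simp add: q_def poly_monom algebra_simps)
        also have "\<dots> = coeff (Q j * monom 1 n) 0 * (LINT t|circ. g t)" by (rule AP[OF G])
        also have "coeff (Q j * monom 1 n) 0 = 0" using n by (simp add: coeff_mult_0 coeff_monom)
        finally show ?thesis by simp
      qed
      have i1: "integrable circ (\<lambda>t. f t * g t * cis t ^ n)"
        by (intro Linf_integrable Linf_mult Lf Lg Linf_cis)
      have i2: "integrable circ (\<lambda>t. q j t * g t * cis t ^ n)"
        by (intro Linf_integrable Linf_mult Lq Lg Linf_cis)
      have "(LINT t|circ. f t * g t * cis t ^ n) = (LINT t|circ. f t * g t * cis t ^ n - q j t * g t * cis t ^ n)"
        using z i1 i2 by simp
      also have "\<dots> = (LINT t|circ. (f t - q j t) * (g t * cis t ^ n))"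
        by (rule Bochner_Integration.integral_cong[OF refl]) (simp add: algebra_simps)
      finally have eq: "(LINT t|circ. f t * g t * cis t ^ n) = (LINT t|circ. (f t - q j t) * (g t * cis t ^ n))" .
      have "X = cmod (LINT t|circ. (f t - q j t) * (g t * cis t ^ n))"
        unfolding X_def eq ..
      also have "\<dots> \<le> (LINT t|circ. cmod ((f t - q j t) * (g t * cis t ^ n)))"
        by (rule integral_norm_bound)
      also have "\<dots> \<le> (LINT t|circ. Bg * (d + (cmod (q j t - f t))^2 / d))"
      proof (rule integral_mono_AE)
        show "integrable circ (\<lambda>t. cmod ((f t - q j t) * (g t * cis t ^ n)))"
          by (intro integrable_norm Linf_integrable Linf_mult Linf_diff Lf Lq Lg Linf_cis)
        show "integrable circ (\<lambda>t. Bg * (d + (cmod (q j t - f t))^2 / d))"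
          using Linf_sq_int[OF Linf_diff[OF Lq Lf]] finite_measure.integrable_const[OF circ_fin]
          by (intro integrable_mult_right Bochner_Integration.integrable_add integrable_divide) auto
        show "AE t in circ. cmod ((f t - q j t) * (g t * cis t ^ n)) \<le> Bg * (d + (cmod (q j t - f t))^2 / d)"
          using Bg(2)
        proof eventually_elim
          case (elim t)
          have "cmod ((f t - q j t) * (g t * cis t ^ n)) = cmod (q j t - f t) * cmod (g t)"
            by (simp add: norm_mult norm_power norm_minus_commute)
          also have "\<dots> \<le> (d + (cmod (q j t - f t))^2 / d) * Bg"
            using small_ineq[OF d, of "cmod (q j t - f t)"] elim Bg(1) d
            by (intro mult_mono) (auto intro!: add_nonneg_nonneg divide_nonneg_pos)
          finally show ?case by (simp add: mult.commute)
        qed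
      qed
      also have "\<dots> = Bg * (2*pi*d + (LINT t|circ. (cmod (q j t - f t))^2) / d)"
        using Linf_sq_int[OF Linf_diff[OF Lq Lf]] finite_measure.integrable_const[OF circ_fin]
        by (simp add: int_const_real)
      finally show ?thesis .
    qed
    have bd: "X \<le> Bg * (2*pi*d)" if d: "d > 0" for d
    proof -
      have "(\<lambda>j. Bg * (2*pi*d + (LINT t|circ. (cmod (q j t - f t))^2) / d)) \<longlonglongrightarrow> Bg * (2*pi*d + 0 / d)"
        using d by (intro tendsto_intros key3) auto
      then show ?thesis using bound[OF d] by (intro LIMSEQ_le_const) auto
    qed
    have "X \<le> 0"
    proof (rule field_le_epsilon)
      fix e :: real assume e: "0 < e"
      define d where "d = e / (2*pi*(Bg+1))"
      have d: "d > 0" using e Bg(1) by (simp add: d_def)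
      have bp: "Bg + 1 > 0" using Bg(1) by simp
      have "2*pi*d = e / (Bg+1)" unfolding d_def by simp
      then have "Bg * (2*pi*d) = (Bg * e) / (Bg + 1)" by simp
      also have "\<dots> \<le> e" using bp e Bg(1) by (simp add: pos_divide_le_eq algebra_simps)
      also have "\<dots> = e * 1" by simp
      finally show "X \<le> 0 + e" using bd[OF d] by simp
    qed
    then show "(LINT t|circ. f t * g t * cis t ^ n) = 0" unfolding X_def by simp
  qed
qed


lemma LP_Re: "LP p \<Longrightarrow> \<exists>U. \<forall>t. Re (p t) = Re (poly U (cis t))"
proof -
  assume "LP p"
  then obtain Q R where QR: "\<And>t. p t = poly Q (cis t) + cnj (poly R (cis t))"
    using LP_split by blast
  have "Re (p t) = Re (poly (Q + R) (cis t))" for t using QR[of t] by simp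
  then show ?thesis by blast
qed

lemma cont_bound: "continuous_on {0..2*pi} u \<Longrightarrow> \<exists>C. C \<ge> 0 \<and> (\<forall>t\<in>{0..2*pi}. cmod (u t) \<le> C)"
proof -
  assume c: "continuous_on {0..2*pi} u"
  have "compact (u ` {0..2*pi})" by (rule compact_continuous_image[OF c]) auto
  then obtain B where "\<forall>x\<in>u ` {0..2*pi}. norm x \<le> B"
    using compact_imp_bounded bounded_iff by metis
  then show ?thesis by (intro exI[of _ "max B 0"]) auto
qed

lemma AP_exp:
  assumes H: "Hinf h"
  shows "(LINT t|circ. h t * exp (poly U (cis t))) = exp (coeff U 0) * (LINT t|circ. h t)"
proof -
  define u where "u t = poly U (cis t)" for t
  have L: "Linf h" using H Hinf_iff by blast
  obtain Bh where Bh: "Bh \<ge> 0" "AE t in circ. cmod (h t) \<le> Bh" using Linf_bound[OF L] by blast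
  have uc: "continuous_on {0..2*pi} u" unfolding u_def by (intro continuous_intros)
  obtain Cu where Cu: "Cu \<ge> 0" "\<And>t. t \<in> {0..2*pi} \<Longrightarrow> cmod (u t) \<le> Cu" using cont_bound[OF uc] by blast
  define F where "F k t = h t * (u t ^ k /\<^sub>R fact k)" for k t
  have Fi: "integrable circ (F k)" for k
    unfolding F_def by (intro Linf_integrable Linf_mult L cont_Linf) (intro continuous_intros uc)
  have IF: "(LINT t|circ. F k t) = (coeff U 0 ^ k /\<^sub>R fact k) * (LINT t|circ. h t)" for k
  proof -
    have "(LINT t|circ. F k t) = (LINT t|circ. of_real (inverse (fact k)) * (h t * poly (U ^ k) (cis t)))"
      by (simp add: F_def u_def poly_power scaleR_conv_of_real algebra_simps)
    also have "\<dots> = of_real (inverse (fact k)) * (LINT t|circ. h t * poly (U ^ k) (cis t))"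
      by simp
    also have "\<dots> = of_real (inverse (fact k)) * (coeff (U ^ k) 0 * (LINT t|circ. h t))"
      using AP[OF H, of "U ^ k"] by simp
    finally show ?thesis by (simp add: coeff_0_power scaleR_conv_of_real)
  qed
  have sum_pt: "(\<lambda>k. F k t) sums (h t * exp (u t))" for t
    unfolding F_def by (intro sums_mult exp_converges)
  have "(LINT t|circ. h t * exp (u t)) = (LINT t|circ. (\<Sum>k. F k t))"
    by (rule Bochner_Integration.integral_cong[OF refl]) (rule sums_unique[OF sum_pt])
  also have "\<dots> = (\<Sum>k. LINT t|circ. F k t)"
  proof (rule integral_suminf)
    show "integrable circ (F k)" for k by (rule Fi)
    show "AE t in circ. summable (\<lambda>k. norm (F k t))"
    proof (rule AE_I2)
      fix t
      have "summable (\<lambda>k. cmod (h t) * norm (u t ^ k /\<^sub>R fact k))"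
        by (intro summable_mult summable_norm_exp)
      then show "summable (\<lambda>k. norm (F k t))" unfolding F_def norm_mult .
    qed
    show "summable (\<lambda>k. LINT t|circ. norm (F k t))"
    proof (rule summable_comparison_test)
      show "summable (\<lambda>k. 2*pi*Bh * (Cu ^ k /\<^sub>R fact k))"
        by (intro summable_mult summable_exp_generic)
      show "\<exists>N. \<forall>k\<ge>N. norm (LINT t|circ. norm (F k t)) \<le> 2*pi*Bh * (Cu ^ k /\<^sub>R fact k)"
      proof (intro exI allI impI)
        fix k :: nat
        have "(LINT t|circ. norm (F k t)) \<le> (LINT t|circ. Bh * (Cu ^ k /\<^sub>R fact k))"
        proof (rule integral_mono_AE)
          show "integrable circ (\<lambda>t. norm (F k t))" by (rule integrable_norm[OF Fi])
          show "integrable circ (\<lambda>t. Bh * (Cu ^ k /\<^sub>R fact k))"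
            using finite_measure.integrable_const[OF circ_fin] by blast
          show "AE t in circ. norm (F k t) \<le> Bh * (Cu ^ k /\<^sub>R fact k)"
            using Bh(2) AE_space[of circ]
          proof eventually_elim
            case (elim t)
            then have t: "t \<in> {0..2*pi}" by simp
            have "norm (F k t) = cmod (h t) * (cmod (u t) ^ k / fact k)"
              by (simp add: F_def norm_mult norm_power divide_inverse_commute)
            also have "\<dots> \<le> Bh * (Cu ^ k / fact k)"
              using elim Cu(2)[OF t] Bh(1)
              by (intro mult_mono divide_right_mono power_mono) auto
            finally show ?case by (simp add: divide_inverse_commute)
          qed
        qed
        also have "\<dots> = 2*pi*Bh * (Cu ^ k /\<^sub>R fact k)" by (simp add: int_const_real)
        finally show "norm (LINT t|circ. norm (F k t)) \<le> 2*pi*Bh * (Cu ^ k /\<^sub>R fact k)"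
          by (simp add: integral_nonneg_AE)
      qed
    qed
  qed
  also have "\<dots> = exp (coeff U 0) * (LINT t|circ. h t)"
  proof -
    have "(\<lambda>k. (coeff U 0 ^ k /\<^sub>R fact k) * (LINT t|circ. h t)) sums (exp (coeff U 0) * (LINT t|circ. h t))"
      by (intro sums_mult2 exp_converges)
    from sums_unique[OF this] show ?thesis unfolding IF by simp
  qed
  finally show ?thesis by (simp add: u_def)
qed


lemma int_poly_cis: "(LINT t|circ. poly U (cis t)) = coeff U 0 * (2*pi)"
  using AP[OF Hinf_one, of U] by (simp add: int_const scaleR_conv_of_real)

lemma int_Re_poly_cis: "(LINT t|circ. Re (poly U (cis t))) = Re (coeff U 0) * (2*pi)"
proof -
  have i: "complex_integrable circ (\<lambda>t. poly U (cis t))"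
    by (rule Linf_integrable[OF Linf_poly])
  show ?thesis using integral_Re[OF i] int_poly_cis[of U] by simp
qed

lemma Hinf_nz0:
  assumes H: "Hinf g" and c0: "(LINT t|circ. g t) \<noteq> 0"
  shows "AE t in circ. g t \<noteq> 0"
proof (rule ccontr)
  assume nAE: "\<not> (AE t in circ. g t \<noteq> 0)"
  have L: "Linf g" using H Hinf_iff by blast
  have gm: "g \<in> borel_measurable circ" by (rule Linf_meas[OF L])
  define E where "E = {t \<in> space circ. g t = 0}"
  have Es: "E \<in> sets circ" unfolding E_def using gm by measurable
  have "emeasure circ E \<noteq> 0"
    using nAE AE_iff_measurable[OF Es, of "\<lambda>t. g t \<noteq> 0"] unfolding E_def by auto
  then have mupos: "measure circ E > 0"
    using finite_measure.emeasure_eq_measure[OF circ_fin, of E] measure_nonneg[of circ E]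
    by (metis ennreal_0 less_eq_real_def)
  define ind where "ind t = (indicator E t :: complex)" for t
  have indm: "ind \<in> borel_measurable circ" unfolding ind_def using Es by measurable
  have Lind: "Linf ind"
  proof -
    have "AE t in circ. cmod (ind t) \<le> 1" by (intro AE_I2) (simp add: ind_def indicator_def)
    then show ?thesis unfolding Linf_def using indm by blast
  qed
  obtain p C where p: "\<And>j. LP (p j)" "\<And>j t. t \<in> {0..2*pi} \<Longrightarrow> cmod (p j t) \<le> C"
    and pl: "AE t in circ. (\<lambda>j. p j t) \<longlonglongrightarrow> ind t"
    using density[OF Lind] by blast
  have "\<forall>j. \<exists>U. \<forall>t. Re (p j t) = Re (poly U (cis t))" using LP_Re p(1) by blast
  then obtain U where U: "\<And>j t. Re (p j t) = Re (poly (U j) (cis t))" by metis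
  obtain Bg where Bg: "Bg \<ge> 0" "AE t in circ. cmod (g t) \<le> Bg" using Linf_bound[OF L] by blast
  define A where "A = (LINT t|circ. cmod (g t))"
  have A0: "A \<ge> 0" unfolding A_def by (rule integral_nonneg_AE) simp
  define c where "c = (LINT t|circ. g t)"
  define M where "M = 2*pi * (A / cmod c) / measure circ E"
  have cpos: "cmod c > 0" using c0 by (simp add: c_def)
  have M0: "M \<ge> 0" using A0 cpos mupos by (simp add: M_def)
  have pc: "continuous_on {0..2*pi} (p j)" for j using p(1) LP_cont by blast
  have pm: "p j \<in> borel_measurable circ" for j by (rule cont_meas[OF pc])
  have ineq: "cmod c * exp (M * (LINT t|circ. Re (p j t)) / (2*pi)) \<le> (LINT t|circ. cmod (g t) * exp (M * Re (p j t)))" for j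
  proof -
    define V where "V = smult (of_real M) (U j)"
    have e1: "(LINT t|circ. g t * exp (poly V (cis t))) = exp (coeff V 0) * c"
      unfolding c_def by (rule AP_exp[OF H])
    have cV: "coeff V 0 = of_real M * coeff (U j) 0" by (simp add: V_def)
    have IR: "(LINT t|circ. Re (p j t)) = Re (coeff (U j) 0) * (2*pi)"
      using int_Re_poly_cis[of "U j"] by (simp add: U)
    have ex: "M * (LINT t|circ. Re (p j t)) / (2*pi) = M * Re (coeff (U j) 0)" unfolding IR by simp
    have "cmod c * exp (M * (LINT t|circ. Re (p j t)) / (2*pi)) = cmod (exp (coeff V 0) * c)"
      unfolding ex by (simp add: cV norm_mult norm_exp_eq_Re mult.commute)
    also have "\<dots> = cmod (LINT t|circ. g t * exp (poly V (cis t)))" by (simp add: e1)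
    also have "\<dots> \<le> (LINT t|circ. cmod (g t * exp (poly V (cis t))))" by (rule integral_norm_bound)
    also have "\<dots> = (LINT t|circ. cmod (g t) * exp (M * Re (p j t)))"
      by (rule Bochner_Integration.integral_cong[OF refl]) (simp add: V_def norm_mult norm_exp_eq_Re U)
    finally show ?thesis .
  qed
  have lim1: "(\<lambda>j. LINT t|circ. Re (p j t)) \<longlonglongrightarrow> (LINT t|circ. Re (ind t))"
  proof (rule integral_dominated_convergence[where w="\<lambda>t. C"])
    show "(\<lambda>t. Re (ind t)) \<in> borel_measurable circ" using indm by measurable
    show "(\<lambda>t. Re (p j t)) \<in> borel_measurable circ" for j using pm[of j] by measurable
    show "integrable circ (\<lambda>t. C)" using finite_measure.integrable_const[OF circ_fin] by blast
    show "AE t in circ. (\<lambda>j. Re (p j t)) \<longlonglongrightarrow> Re (ind t)"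
      using pl by eventually_elim (intro tendsto_intros)
    show "AE t in circ. norm (Re (p j t)) \<le> C" for j
      using AE_space[of circ]
    proof eventually_elim
      case (elim t) then have t: "t \<in> {0..2*pi}" by simp
      show ?case using abs_Re_le_cmod[of "p j t"] p(2)[OF t, of j] by simp
    qed
  qed
  have "(LINT t|circ. Re (ind t)) = measure circ E"
  proof -
    have "(\<lambda>t. Re (ind t)) = indicator E" by (auto simp: ind_def indicator_def fun_eq_iff)
    moreover have "E \<inter> {0..2*pi} = E" by (auto simp: E_def)
    ultimately show ?thesis
      using Es finite_measure.emeasure_finite[OF circ_fin, of E] by (simp add: integral_indicator)
  qed
  note lim1 = lim1[unfolded this]
  have lim2: "(\<lambda>j. LINT t|circ. cmod (g t) * exp (M * Re (p j t))) \<longlonglongrightarrow> (LINT t|circ. cmod (g t) * exp (M * Re (ind t)))"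
  proof (rule integral_dominated_convergence[where w="\<lambda>t. Bg * exp (M * C)"])
    show "(\<lambda>t. cmod (g t) * exp (M * Re (ind t))) \<in> borel_measurable circ" using indm gm by measurable
    show "(\<lambda>t. cmod (g t) * exp (M * Re (p j t))) \<in> borel_measurable circ" for j using pm[of j] gm by measurable
    show "integrable circ (\<lambda>t. Bg * exp (M * C))" using finite_measure.integrable_const[OF circ_fin] by blast
    show "AE t in circ. (\<lambda>j. cmod (g t) * exp (M * Re (p j t))) \<longlonglongrightarrow> cmod (g t) * exp (M * Re (ind t))"
      using pl by eventually_elim (intro tendsto_intros)
    show "AE t in circ. norm (cmod (g t) * exp (M * Re (p j t))) \<le> Bg * exp (M * C)" for j
      using AE_space[of circ] Bg(2)
    proof eventually_elim
      case (elim t) then have t: "t \<in> {0..2*pi}" by simp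
      have "Re (p j t) \<le> C" using abs_Re_le_cmod[of "p j t"] p(2)[OF t, of j] by simp
      then have "exp (M * Re (p j t)) \<le> exp (M * C)" using M0 by (simp add: mult_left_mono)
      then show ?case using elim Bg(1) by (simp add: abs_mult mult_mono)
    qed
  qed
  have "(LINT t|circ. cmod (g t) * exp (M * Re (ind t))) = A"
    unfolding A_def by (rule Bochner_Integration.integral_cong[OF refl]) (auto simp: ind_def E_def indicator_def)
  note lim2 = lim2[unfolded this]
  have "cmod c * exp (M * measure circ E / (2*pi)) \<le> A"
  proof (rule LIMSEQ_le[OF _ lim2])
    show "(\<lambda>j. cmod c * exp (M * (LINT t|circ. Re (p j t)) / (2*pi))) \<longlonglongrightarrow> cmod c * exp (M * measure circ E / (2*pi))"
      by (intro tendsto_intros lim1) simp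
    show "\<exists>N. \<forall>n\<ge>N. cmod c * exp (M * (LINT t|circ. Re (p n t)) / (2*pi)) \<le> (LINT t|circ. cmod (g t) * exp (M * Re (p n t)))"
      using ineq by blast
  qed
  moreover have "M * measure circ E / (2*pi) = A / cmod c"
    using mupos by (simp add: M_def)
  ultimately have "cmod c * exp (A / cmod c) \<le> A" by simp
  moreover have "A / cmod c < exp (A / cmod c)"
    using exp_ge_add_one_self[of "A / cmod c"] by linarith
  then have "cmod c * (A / cmod c) < cmod c * exp (A / cmod c)"
    using cpos by (intro mult_strict_left_mono) auto
  then have "A < cmod c * exp (A / cmod c)" using cpos by simp
  ultimately show False by simp
qed


lemma Hinf_nz:
  assumes H: "Hinf g" and nz: "\<not> (AE t in circ. g t = 0)"
  shows "AE t in circ. g t \<noteq> 0"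
proof -
  have L: "Linf g" using H Hinf_iff by blast
  obtain m :: int where m: "(LINT t|circ. g t * cis (of_int m * t)) \<noteq> 0"
    using uniq[OF L] nz by blast
  have "\<not> m \<ge> 1"
  proof
    assume m1: "m \<ge> 1"
    have "cis (of_int m * t) = cis t ^ nat m" for t
      using m1 by (simp add: cis_pow_real)
    then have "(LINT t|circ. g t * cis (of_int m * t)) = (LINT t|circ. g t * cis t ^ nat m)" by simp
    also have "\<dots> = 0" using H m1 unfolding Hinf_iff by auto
    finally show False using m by simp
  qed
  then have ex: "\<exists>k::nat. (LINT t|circ. g t * cis (- (real k * t))) \<noteq> 0"
    using m by (intro exI[of _ "nat (- m)"]) simp
  define k0 where "k0 = (LEAST k::nat. (LINT t|circ. g t * cis (- (real k * t))) \<noteq> 0)"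
  have k0: "(LINT t|circ. g t * cis (- (real k0 * t))) \<noteq> 0"
    unfolding k0_def using LeastI_ex[OF ex] .
  have k0min: "(LINT t|circ. g t * cis (- (real k * t))) = 0" if "k < k0" for k
    using not_less_Least[of k "\<lambda>k. (LINT t|circ. g t * cis (- (real k * t))) \<noteq> 0"] that
    unfolding k0_def by blast
  define g' where "g' t = g t * cis (- (real k0 * t))" for t
  have H': "Hinf g'"
    unfolding Hinf_iff
  proof (intro conjI allI impI)
    show "Linf g'" unfolding g'_def by (intro Linf_mult L cont_Linf) (intro continuous_intros)
    fix n :: nat assume n: "n \<ge> 1"
    have e: "g' t * cis t ^ n = g t * cis ((real n - real k0) * t)" for t
      by (simp add: g'_def cis_pow_real cis_mult algebra_simps)
    show "(LINT t|circ. g' t * cis t ^ n) = 0"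
    proof (cases "k0 < n")
      case True
      have "cis ((real n - real k0) * t) = cis t ^ (n - k0)" for t
        using True by (simp add: cis_pow_real of_nat_diff)
      then have "(LINT t|circ. g' t * cis t ^ n) = (LINT t|circ. g t * cis t ^ (n - k0))"
        by (simp add: e)
      also have "\<dots> = 0" using H True unfolding Hinf_iff by auto
      finally show ?thesis .
    next
      case False
      have "cis ((real n - real k0) * t) = cis (- (real (k0 - n) * t))" for t
        using False by (simp add: of_nat_diff algebra_simps)
      then have "(LINT t|circ. g' t * cis t ^ n) = (LINT t|circ. g t * cis (- (real (k0 - n) * t)))"
        by (simp add: e)
      also have "\<dots> = 0" by (rule k0min) (use False n in simp)
      finally show ?thesis .
    qed
  qed
  have "(LINT t|circ. g' t) \<noteq> 0" using k0 by (simp add: g'_def)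
  from Hinf_nz0[OF H' this] show ?thesis
    by eventually_elim (simp add: g'_def)
qed


lemma not_AE_False: "\<not> (AE t in circ. False)"
proof
  assume "AE t in circ. False"
  then have "emeasure circ (space circ) = 0"
    using AE_iff_measurable[of "space circ" circ "\<lambda>t. False"] by (simp add: atLeastAtMost_def atLeast_def atMost_def Collect_conj_eq)
  moreover have "emeasure circ (space circ) = ennreal (2*pi)"
    using finite_measure.emeasure_eq_measure[OF circ_fin, of "space circ"] by simp
  ultimately show False by simp
qed

lemma AE_nz_not_AE_z: "AE t in circ. g t \<noteq> 0 \<Longrightarrow> \<not> (AE t in circ. g t = 0)"
proof
  assume "AE t in circ. g t \<noteq> 0" "AE t in circ. g t = 0"
  then have "AE t in circ. False" by eventually_elim simp
  then show False using not_AE_False by simp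
qed

lemma Nev_rep:
  assumes "Nev h"
  shows "\<exists>f g. Hinf f \<and> Hinf g \<and> (AE t in circ. g t \<noteq> 0) \<and> (AE t in circ. h t = f t / g t)"
  using assms Hinf_nz unfolding Nev_def by blast

lemma Nev_intro:
  assumes "Hinf f" "Hinf g" "AE t in circ. g t \<noteq> 0" "AE t in circ. h t = f t / g t"
  shows "Nev h"
  using assms AE_nz_not_AE_z unfolding Nev_def by blast

lemma Nev_AE: "Nev h \<Longrightarrow> AE t in circ. h t = h' t \<Longrightarrow> Nev h'"
proof -
  assume "Nev h" "AE t in circ. h t = h' t"
  moreover obtain f g where "Hinf f" "Hinf g" "\<not> (AE t in circ. g t = 0)" "AE t in circ. h t = f t / g t"
    using \<open>Nev h\<close> unfolding Nev_def by blast
  ultimately show "Nev h'" unfolding Nev_def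
    by (intro exI[of _ f] exI[of _ g]) (auto elim: AE_mp)
qed

lemma Hinf_Nev: "Hinf f \<Longrightarrow> Nev f"
  by (rule Nev_intro[of f "\<lambda>t. 1"]) (auto simp: Hinf_one)

lemma Nev_const: "Nev (\<lambda>t. c)"
  by (rule Hinf_Nev[OF Hinf_const])

lemma Nev_add:
  assumes "Nev h1" "Nev h2" shows "Nev (\<lambda>t. h1 t + h2 t)"
proof -
  obtain f1 g1 where 1: "Hinf f1" "Hinf g1" "AE t in circ. g1 t \<noteq> 0" "AE t in circ. h1 t = f1 t / g1 t"
    using Nev_rep[OF assms(1)] by blast
  obtain f2 g2 where 2: "Hinf f2" "Hinf g2" "AE t in circ. g2 t \<noteq> 0" "AE t in circ. h2 t = f2 t / g2 t"
    using Nev_rep[OF assms(2)] by blast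
  show ?thesis
  proof (rule Nev_intro)
    show "Hinf (\<lambda>t. f1 t * g2 t + f2 t * g1 t)" by (intro Hinf_add Hinf_mult 1 2)
    show "Hinf (\<lambda>t. g1 t * g2 t)" by (intro Hinf_mult 1 2)
    show "AE t in circ. g1 t * g2 t \<noteq> 0" using 1(3) 2(3) by eventually_elim simp
    show "AE t in circ. h1 t + h2 t = (f1 t * g2 t + f2 t * g1 t) / (g1 t * g2 t)"
      using 1(3,4) 2(3,4) by eventually_elim (simp add: field_simps)
  qed
qed

lemma Nev_mult:
  assumes "Nev h1" "Nev h2" shows "Nev (\<lambda>t. h1 t * h2 t)"
proof -
  obtain f1 g1 where 1: "Hinf f1" "Hinf g1" "AE t in circ. g1 t \<noteq> 0" "AE t in circ. h1 t = f1 t / g1 t"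
    using Nev_rep[OF assms(1)] by blast
  obtain f2 g2 where 2: "Hinf f2" "Hinf g2" "AE t in circ. g2 t \<noteq> 0" "AE t in circ. h2 t = f2 t / g2 t"
    using Nev_rep[OF assms(2)] by blast
  show ?thesis
  proof (rule Nev_intro)
    show "Hinf (\<lambda>t. f1 t * f2 t)" by (intro Hinf_mult 1 2)
    show "Hinf (\<lambda>t. g1 t * g2 t)" by (intro Hinf_mult 1 2)
    show "AE t in circ. g1 t * g2 t \<noteq> 0" using 1(3) 2(3) by eventually_elim simp
    show "AE t in circ. h1 t * h2 t = (f1 t * f2 t) / (g1 t * g2 t)"
      using 1(4) 2(4) by eventually_elim simp
  qed
qed

lemma Nev_sum: "finite S \<Longrightarrow> (\<And>i. i \<in> S \<Longrightarrow> Nev (a i)) \<Longrightarrow> Nev (\<lambda>t. \<Sum>i\<in>S. a i t)"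
proof (induction S rule: finite_induct)
  case empty then show ?case by (simp add: Nev_const)
next
  case (insert x F) then show ?case by (simp add: Nev_add)
qed

lemma Nev_prod: "finite S \<Longrightarrow> (\<And>i. i \<in> S \<Longrightarrow> Nev (a i)) \<Longrightarrow> Nev (\<lambda>t. \<Prod>i\<in>S. a i t)"
proof (induction S rule: finite_induct)
  case empty then show ?case by (simp add: Nev_const)
next
  case (insert x F) then show ?case by (simp add: Nev_mult)
qed

lemma Nev_det:
  fixes M :: "real \<Rightarrow> complex^'n::finite^'n"
  assumes "\<And>i j. Nev (\<lambda>t. M t $ i $ j)"
  shows "Nev (\<lambda>t. det (M t))"
  unfolding det_def
  by (intro Nev_sum Nev_mult Nev_const Nev_prod assms finite_permutations) auto

lemma Nev_nz:
  assumes "Nev h" "\<not> (AE t in circ. h t = 0)"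
  shows "AE t in circ. h t \<noteq> 0"
proof -
  obtain f g where fg: "Hinf f" "Hinf g" "AE t in circ. g t \<noteq> 0" "AE t in circ. h t = f t / g t"
    using Nev_rep[OF assms(1)] by blast
  have "\<not> (AE t in circ. f t = 0)"
  proof
    assume "AE t in circ. f t = 0"
    with fg(4) have "AE t in circ. h t = 0" by eventually_elim simp
    with assms(2) show False by simp
  qed
  then have "AE t in circ. f t \<noteq> 0" by (rule Hinf_nz[OF fg(1)])
  with fg(3,4) show ?thesis by eventually_elim simp
qed


lemma col_sum_eq:
  fixes A :: "complex^'m::finite^'m" and \<Phi> :: "complex^'r::finite^'m"
  shows "(\<Sum>j\<in>UNIV. a j * (column j (A ** \<Phi>) $ i)) =
         (\<Sum>k\<in>UNIV. A $ i $ k * (\<Sum>j\<in>UNIV. a j * (column j \<Phi> $ k)))"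
proof -
  have "(\<Sum>j\<in>UNIV. a j * (column j (A ** \<Phi>) $ i)) = (\<Sum>j\<in>UNIV. \<Sum>k\<in>UNIV. A $ i $ k * (a j * \<Phi> $ k $ j))"
    by (simp add: column_def matrix_matrix_mult_def sum_distrib_left algebra_simps)
  also have "\<dots> = (\<Sum>k\<in>UNIV. \<Sum>j\<in>UNIV. A $ i $ k * (a j * \<Phi> $ k $ j))" by (rule sum.swap)
  also have "\<dots> = (\<Sum>k\<in>UNIV. A $ i $ k * (\<Sum>j\<in>UNIV. a j * (column j \<Phi> $ k)))"
    by (simp add: column_def sum_distrib_left)
  finally show ?thesis .
qed

theorem mainTheorem10:
  fixes A :: "real \<Rightarrow> complex^'m::finite^'m"
    and \<Phi> :: "real \<Rightarrow> complex^'r::finite^'m"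
  assumes "\<forall>i j. Nev_inf (\<lambda>t. A t $ i $ j)"
    and "\<not> (AE t in circ. det (A t) = 0)"
    and "\<forall>i j. L2 (\<lambda>t. \<Phi> t $ i $ j)"
  shows "indep_mod_Nev (\<lambda>j t. column j (\<Phi> t))
     \<longleftrightarrow> indep_mod_Nev (\<lambda>j t. column j (A t ** \<Phi> t))"
proof -
  have NA: "\<And>i j. Nev (\<lambda>t. A t $ i $ j)" using assms(1) unfolding Nev_inf_def by blast
  have Nd: "Nev (\<lambda>t. det (A t))" by (rule Nev_det[OF NA])
  have dnz: "AE t in circ. det (A t) \<noteq> 0" by (rule Nev_nz[OF Nd assms(2)])
  define b where "b a t = (\<chi> k. \<Sum>j\<in>UNIV. a j t * (column j (\<Phi> t) $ k))" for a :: "'r \<Rightarrow> real \<Rightarrow> complex" and t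
  have psi: "(\<Sum>j\<in>UNIV. a j t * (column j (A t ** \<Phi> t) $ i)) = (A t *v b a t) $ i" for a t i
    unfolding col_sum_eq by (simp add: b_def matrix_vector_mult_def)
  show ?thesis
  proof
    assume I: "indep_mod_Nev (\<lambda>j t. column j (\<Phi> t))"
    show "indep_mod_Nev (\<lambda>j t. column j (A t ** \<Phi> t))"
      unfolding indep_mod_Nev_def
    proof (rule allI, rule impI)
      fix a :: "'r \<Rightarrow> real \<Rightarrow> complex"
      assume a: "(\<forall>j. Nev (a j)) \<and> (\<forall>i. Nev (\<lambda>t. \<Sum>j\<in>UNIV. a j t * (column j (A t ** \<Phi> t) $ i)))"
      then have Na: "\<And>j. Nev (a j)" and Nc: "\<And>i. Nev (\<lambda>t. (A t *v b a t) $ i)" by (auto simp: psi)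
      have Ndb: "Nev (\<lambda>t. det (A t) * b a t $ k)" for k
      proof -
        have "Nev (\<lambda>t. det (\<chi> i l. if l = k then (A t *v b a t) $ i else A t $ i $ l))"
        proof (rule Nev_det)
          fix i l
          show "Nev (\<lambda>t. (\<chi> i l. if l = k then (A t *v b a t) $ i else A t $ i $ l) $ i $ l)"
            by (cases "l = k") (simp_all add: Nc NA)
        qed
        then show ?thesis by (simp add: cramer_lemma mult.commute)
      qed
      define a' where "a' j t = det (A t) * a j t" for j t
      have "(\<forall>j. Nev (a' j)) \<and> (\<forall>k. Nev (\<lambda>t. \<Sum>j\<in>UNIV. a' j t * (column j (\<Phi> t) $ k)))"
      proof (intro conjI allI)
        show "Nev (a' j)" for j unfolding a'_def by (intro Nev_mult Nd Na)
        fix k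
        have "(\<lambda>t. \<Sum>j\<in>UNIV. a' j t * (column j (\<Phi> t) $ k)) = (\<lambda>t. det (A t) * b a t $ k)"
          by (simp add: a'_def b_def sum_distrib_left algebra_simps)
        then show "Nev (\<lambda>t. \<Sum>j\<in>UNIV. a' j t * (column j (\<Phi> t) $ k))" using Ndb by simp
      qed
      then have z: "\<And>j. AE t in circ. a' j t = 0" using I unfolding indep_mod_Nev_def by blast
      show "\<forall>j. AE t in circ. a j t = 0"
      proof
        fix j show "AE t in circ. a j t = 0"
          using z[of j] dnz by eventually_elim (simp add: a'_def)
      qed
    qed
  next
    assume I: "indep_mod_Nev (\<lambda>j t. column j (A t ** \<Phi> t))"
    show "indep_mod_Nev (\<lambda>j t. column j (\<Phi> t))"
      unfolding indep_mod_Nev_def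
    proof (rule allI, rule impI)
      fix a :: "'r \<Rightarrow> real \<Rightarrow> complex"
      assume a: "(\<forall>j. Nev (a j)) \<and> (\<forall>k. Nev (\<lambda>t. \<Sum>j\<in>UNIV. a j t * (column j (\<Phi> t) $ k)))"
      then have Na: "\<And>j. Nev (a j)" and Nb: "\<And>k. Nev (\<lambda>t. \<Sum>j\<in>UNIV. a j t * (column j (\<Phi> t) $ k))"
        by auto
      have "Nev (\<lambda>t. \<Sum>j\<in>UNIV. a j t * (column j (A t ** \<Phi> t) $ i))" for i
        unfolding col_sum_eq by (intro Nev_sum Nev_mult NA Nb) auto
      then show "\<forall>j. AE t in circ. a j t = 0"
        using I Na unfolding indep_mod_Nev_def by blast
    qed
  qed
qed


end
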